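(* Let $d\ge2$, $0<\eta\le\frac{1}{2d}$ and $\gamma=\eta d$, and consider one round $t$ of the Bandit-PCA Online Mirror Descent algorithm with sparse sampling, where $\boldsymbol{W}_t$ is a positive definite density matrix and $\boldsymbol{L}_t$ is symmetric with spectral norm at most $1$. Then $\boldsymbol{W}_t^{-1}+\eta\widetilde{\boldsymbol{L}}_t$ is positive definite and, with $\widetilde{\boldsymbol{W}}_{t+1}=(\boldsymbol{W}_t^{-1}+\eta\widetilde{\boldsymbol{L}}_t)^{-1}$, \[ \mathbb{E}_t\big[\langle\boldsymbol{W}_t-\widetilde{\boldsymbol{W}}_{t+1},\widetilde{\boldsymbol{L}}_t\rangle\big]\le8\eta d\,\|\boldsymbol{L}_t\|_F^2, \] where $\mathbb{E}_t$ is expectation over the round-$t$ sampling randomness given $\boldsymbol{W}_t$ and $\boldsymbol{L}_t$.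
   Context: Notation: $\langle \boldsymbol{A},\boldsymbol{B}\rangle=\mathrm{tr}(\boldsymbol{A}^\top \boldsymbol{B})$; $\|\cdot\|_F$ Frobenius norm; a density matrix is a symmetric positive semidefinite matrix of trace $1$. Sparse sampling at round $t$: write $\boldsymbol{W}_t=\sum_i\mu_i\boldsymbol{u}_i\boldsymbol{u}_i^\top$ (eigendecomposition, orthonormal $\boldsymbol{u}_i$) and $\lambda_i=(1-\gamma)\mu_i+\gamma/d$. Draw $I,J$ independently with $\Pr(I=i)=\Pr(J=i)=\lambda_i$. If $I=J$: $\boldsymbol{w}_t=\boldsymbol{u}_I$ and $\widetilde{\boldsymbol{L}}_t=(\ell_t/\lambda_I^2)\boldsymbol{u}_I\boldsymbol{u}_I^\top$. If $I\ne J$: draw a uniform sign $s\in\{-1,1\}$, $\boldsymbol{w}_t=(\boldsymbol{u}_I+s\boldsymbol{u}_J)/\sqrt2$ and $\widetilde{\boldsymbol{L}}_t=\frac{s\ell_t}{2\lambda_I\lambda_J}(\boldsymbol{u}_I\boldsymbol{u}_J^\top+\boldsymbol{u}_J\boldsymbol{u}_I^\top)$. Here $\ell_t=\boldsymbol{w}_t^\top\boldsymbol{L}_t\boldsymbol{w}_t$. *)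

theory Defs
  imports "HOL-Analysis.Analysis"
begin

(* Matrices are real^'n^'n with 'n a finite index type, d = CARD('n). *)

definition outer :: "real^'n \<Rightarrow> real^'n \<Rightarrow> real^'n^'n" where
  "outer u v = (\<chi> i j. u $ i * v $ j)"

definition sym_mat :: "real^'n^'n \<Rightarrow> bool" where
  "sym_mat A \<longleftrightarrow> transpose A = A"

definition pos_def :: "real^'n^'n \<Rightarrow> bool" where
  "pos_def A \<longleftrightarrow> sym_mat A \<and> (\<forall>x. x \<noteq> 0 \<longrightarrow> x \<bullet> (A *v x) > 0)"

definition frob_inner :: "real^'n^'n \<Rightarrow> real^'n^'n \<Rightarrow> real" where
  "frob_inner A B = trace (transpose A ** B)"

definition frob_norm :: "real^'n^'n \<Rightarrow> real" where
  "frob_norm A = sqrt (frob_inner A A)"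

definition spec_norm :: "real^'n^'n \<Rightarrow> real" where
  "spec_norm A = onorm (\<lambda>x. A *v x)"

(* sampling probabilities lambda_i = (1-gamma) mu_i + gamma/d with gamma = eta d *)
definition samp_prob :: "real \<Rightarrow> ('n::finite \<Rightarrow> real) \<Rightarrow> 'n \<Rightarrow> real" where
  "samp_prob eta mu i = (1 - eta * real CARD('n)) * mu i + eta * real CARD('n) / real CARD('n)"

definition sparse_w :: "('n \<Rightarrow> real^'n) \<Rightarrow> 'n \<Rightarrow> 'n \<Rightarrow> real \<Rightarrow> real^'n" where
  "sparse_w u I J s = (if I = J then u I else (1 / sqrt 2) *\<^sub>R (u I + s *\<^sub>R u J))"

definition sparse_Lt :: "('n \<Rightarrow> real^'n) \<Rightarrow> ('n \<Rightarrow> real) \<Rightarrow> real^'n^'n \<Rightarrow> 'n \<Rightarrow> 'n \<Rightarrow> real \<Rightarrow> real^'n^'n" where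
  "sparse_Lt u lam L I J s =
     (let w = sparse_w u I J s; l = w \<bullet> (L *v w) in
      if I = J then (l / (lam I)^2) *\<^sub>R outer (u I) (u I)
      else (s * l / (2 * lam I * lam J)) *\<^sub>R (outer (u I) (u J) + outer (u J) (u I)))"

(* expectation over I, J independent with law lam, and a uniform sign s when I \<noteq> J *)
definition sparse_expect :: "('n::finite \<Rightarrow> real) \<Rightarrow> ('n \<Rightarrow> 'n \<Rightarrow> real \<Rightarrow> real) \<Rightarrow> real" where
  "sparse_expect lam f = (\<Sum>I\<in>UNIV. \<Sum>J\<in>UNIV. lam I * lam J *
      (if I = J then f I J 1 else (f I J 1 + f I J (-1)) / 2))"

end

theory Submission
  imports Defs
begin


definition Um :: "('n::finite \<Rightarrow> real^'n) \<Rightarrow> real^'n^'n" where "Um u = (\<chi> r c. u c $ r)"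
definition cj :: "('n::finite \<Rightarrow> real^'n) \<Rightarrow> real^'n^'n \<Rightarrow> real^'n^'n" where
  "cj u M = Um u ** M ** transpose (Um u)"
definition Dg :: "('n::finite \<Rightarrow> real) \<Rightarrow> real^'n^'n" where "Dg f = (\<chi> i j. if i = j then f i else 0)"
definition Em :: "'n::finite \<Rightarrow> 'n \<Rightarrow> real^'n^'n" where "Em i j = (\<chi> a b. if a = i \<and> b = j then 1 else 0)"

lemma orth1: assumes "\<forall>i j. u i \<bullet> u j = (if i = j then 1 else 0)"
  shows "transpose (Um u) ** Um u = mat 1"
  using assms by (simp add: vec_eq_iff matrix_matrix_mult_def transpose_def Um_def mat_def inner_vec_def)

lemma orth2: assumes "\<forall>i j. u i \<bullet> u j = (if i = j then 1 else 0)"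
  shows "Um u ** transpose (Um u) = mat 1"
  using orth1[OF assms] matrix_left_right_inverse by blast

lemma matrix_rdistrib: "((B + C) ** A) = (B ** A) + (C ** A)" for A B C :: "real^'n^'n"
  by (simp add: matrix_matrix_mult_def vec_eq_iff sum.distrib algebra_simps)
lemma matrix_ldistrib_diff: "(A ** (B - C)) = (A ** B) - (A ** C)" for A B C :: "real^'n^'n"
  by (simp add: matrix_matrix_mult_def vec_eq_iff sum_subtractf algebra_simps)
lemma matrix_rdistrib_diff: "((B - C) ** A) = (B ** A) - (C ** A)" for A B C :: "real^'n^'n"
  by (simp add: matrix_matrix_mult_def vec_eq_iff sum_subtractf algebra_simps)
lemma matrix_scale_l: "((c *\<^sub>R B) ** A) = c *\<^sub>R (B ** A)" for A B :: "real^'n^'n"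
  by (simp add: matrix_matrix_mult_def vec_eq_iff sum_distrib_left algebra_simps)
lemma matrix_scale_r: "(A ** (c *\<^sub>R B)) = c *\<^sub>R (A ** B)" for A B :: "real^'n^'n"
  by (simp add: matrix_matrix_mult_def vec_eq_iff sum_distrib_left algebra_simps)

lemma cj_add: "cj u (A + B) = cj u A + cj u B"
  by (simp add: cj_def matrix_add_ldistrib matrix_rdistrib)
lemma cj_diff: "cj u (A - B) = cj u A - cj u B"
  by (simp add: cj_def matrix_ldistrib_diff matrix_rdistrib_diff)
lemma cj_scale: "cj u (c *\<^sub>R A) = c *\<^sub>R cj u A"
  by (simp add: cj_def matrix_scale_l matrix_scale_r)
lemma cj_mult: assumes "\<forall>i j. u i \<bullet> u j = (if i = j then 1 else 0)"
  shows "cj u (A ** B) = cj u A ** cj u B"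
proof -
  have "cj u A ** cj u B = Um u ** A ** (transpose (Um u) ** Um u) ** B ** transpose (Um u)"
    by (simp add: cj_def matrix_mul_assoc)
  then show ?thesis using orth1[OF assms] by (simp add: cj_def matrix_mul_assoc)
qed
lemma cj_one: assumes "\<forall>i j. u i \<bullet> u j = (if i = j then 1 else 0)"
  shows "cj u (mat 1) = mat 1"
  using orth2[OF assms] by (simp add: cj_def)

lemma inv_unique: fixes A B :: "real^'n^'n" assumes "A ** B = mat 1" shows "matrix_inv A = B"
proof -
  have BA: "B ** A = mat 1" using assms matrix_left_right_inverse by blast
  show ?thesis unfolding matrix_inv_def
  proof (rule some_equality)
    show "A ** B = mat 1 \<and> B ** A = mat 1" using assms BA by simp
  next
    fix C assume "A ** C = mat 1 \<and> C ** A = mat 1"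
    then have "C = (C ** A) ** B" using assms by (metis matrix_mul_assoc matrix_mul_rid)
    then show "C = B" using \<open>A ** C = mat 1 \<and> C ** A = mat 1\<close> by simp
  qed
qed

lemma cj_inv: assumes "\<forall>i j. u i \<bullet> u j = (if i = j then 1 else 0)" and "A ** B = mat 1"
  shows "matrix_inv (cj u A) = cj u B"
  by (rule inv_unique) (simp add: cj_mult[OF assms(1), symmetric] assms(2) cj_one[OF assms(1)])

lemma trace_cj: assumes "\<forall>i j. u i \<bullet> u j = (if i = j then 1 else 0)"
  shows "trace (cj u A) = trace A"
proof -
  have "trace (cj u A) = trace (Um u ** (A ** transpose (Um u)))" by (simp add: cj_def matrix_mul_assoc)
  also have "\<dots> = trace ((A ** transpose (Um u)) ** Um u)" by (rule trace_mul_sym)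
  also have "\<dots> = trace A" using orth1[OF assms] by (simp add: matrix_mul_assoc[symmetric])
  finally show ?thesis .
qed

lemma transpose_cj: "transpose (cj u A) = cj u (transpose A)"
  by (simp add: cj_def matrix_transpose_mul matrix_mul_assoc)

lemma frob_cj: assumes "\<forall>i j. u i \<bullet> u j = (if i = j then 1 else 0)"
  shows "frob_inner (cj u A) (cj u B) = frob_inner A B"
  by (simp add: frob_inner_def transpose_cj cj_mult[OF assms, symmetric] trace_cj[OF assms])

lemma sum_if_conj: "(\<Sum>ka\<in>(UNIV::'n::finite set). if ka = i \<and> P then (X::real) else 0) = (if P then X else 0)"
  by (cases P) auto

lemma outer_cj: "outer (u i) (u j) = cj u (Em i j)"
  by (simp add: outer_def cj_def Um_def Em_def vec_eq_iff matrix_matrix_mult_def transpose_def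
      if_distrib if_distribR sum_if_conj cong: if_cong)



lemma quad_cj: "x \<bullet> (cj u M *v x) = (transpose (Um u) *v x) \<bullet> (M *v (transpose (Um u) *v x))"
proof -
  have "cj u M *v x = Um u *v (M *v (transpose (Um u) *v x))"
    by (simp add: cj_def matrix_vector_mul_assoc matrix_mul_assoc del: transpose_matrix_vector)
  then have "x \<bullet> (cj u M *v x) = (x v* Um u) \<bullet> (M *v (transpose (Um u) *v x))"
    by (simp add: dot_lmul_matrix)
  then show ?thesis by simp
qed

lemma pos_cj: assumes "\<forall>i j. u i \<bullet> u j = (if i = j then 1 else 0)" and "pos_def M"
  shows "pos_def (cj u M)"
  unfolding pos_def_def
proof (intro conjI allI impI)
  show "sym_mat (cj u M)" using assms(2) by (simp add: pos_def_def sym_mat_def transpose_cj)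
next
  fix x :: "real^'a" assume "x \<noteq> 0"
  have "Um u *v (transpose (Um u) *v x) = x" using orth2[OF assms(1)] by (simp add: matrix_vector_mul_assoc del: transpose_matrix_vector)
  then have "transpose (Um u) *v x \<noteq> 0" using \<open>x \<noteq> 0\<close> by (metis matrix_vector_mult_0_right)
  then show "0 < x \<bullet> (cj u M *v x)" using assms(2) by (simp add: quad_cj pos_def_def del: transpose_matrix_vector)
qed

lemma UT_u: assumes "\<forall>i j. u i \<bullet> u j = (if i = j then 1 else 0)"
  shows "transpose (Um u) *v u i = axis i 1"
  using assms by (simp add: vec_eq_iff matrix_vector_mult_def transpose_def Um_def axis_def inner_vec_def del: transpose_matrix_vector)

lemma ifm_l: "(if P then (a::real) else 0) * b = (if P then a * b else 0)" by simp
lemma ifm_r: "(b::real) * (if P then a else 0) = (if P then b * a else 0)" by simp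

lemma sif1: "(\<Sum>k\<in>(UNIV::'n::finite set). if k = i \<and> P then (F k::real) else 0) = (if P then F i else 0)"
  by (cases P) auto
lemma sif2: "(\<Sum>k\<in>(UNIV::'n::finite set). if P \<and> k = i then (F k::real) else 0) = (if P then F i else 0)"
  by (cases P) auto

lemma Dg_mult: "Dg f ** Dg g = Dg (\<lambda>i. f i * g i)"
  unfolding Dg_def matrix_matrix_mult_def vec_eq_iff
  by (simp add: ifm_l ifm_r sif1 sif2)
lemma Dg_one: "Dg (\<lambda>_. 1) = mat 1"
  by (simp add: Dg_def mat_def)
lemma frob_Em: "frob_inner X (Em i j) = X $ i $ j"
  by (simp add: frob_inner_def trace_def Em_def matrix_matrix_mult_def transpose_def ifm_l ifm_r sif1 sif2)
lemma Dg_quad: "x \<bullet> (Dg f *v x) = (\<Sum>i\<in>UNIV. f i * (x $ i)^2)"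
  by (simp add: Dg_def matrix_vector_mult_def inner_vec_def ifm_l ifm_r power2_eq_square algebra_simps)
lemma Em_quad: "x \<bullet> (Em i j *v x) = x $ i * x $ j"
  by (simp add: Em_def matrix_vector_mult_def inner_vec_def ifm_l ifm_r sif1 sif2)
lemma pos_Dg: assumes "\<forall>i. f i > 0" shows "pos_def (Dg f)"
  unfolding pos_def_def
proof (intro conjI allI impI)
  show "sym_mat (Dg f)" by (simp add: sym_mat_def Dg_def transpose_def vec_eq_iff)
next
  fix x :: "real^'a" assume "x \<noteq> 0"
  then obtain k where k: "x $ k \<noteq> 0" by (metis vec_eq_iff zero_index)
  have "0 < f k * (x $ k)^2" using assms k by simp
  also have "\<dots> \<le> (\<Sum>i\<in>UNIV. f i * (x $ i)^2)"
    by (rule member_le_sum) (use assms in \<open>auto simp: less_imp_le\<close>)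
  finally show "0 < x \<bullet> (Dg f *v x)" by (simp add: Dg_quad)
qed

lemma W_cj: assumes "W = (\<Sum>i\<in>UNIV. mu i *\<^sub>R outer (u i) (u i))"
  shows "W = cj u (Dg mu)"
  using assms by (simp add: cj_def Dg_def Um_def outer_def vec_eq_iff matrix_matrix_mult_def transpose_def
      ifm_l ifm_r sum_component mult.assoc mult.left_commute)

lemma ifsq: "(if P then (1::real) else 0)^2 = (if P then 1 else 0)" by simp

lemma mu_pos: assumes "\<forall>i j. u i \<bullet> u j = (if i = j then 1 else 0)" and "pos_def (cj u (Dg mu))"
  shows "mu i > 0"
proof -
  have "u i \<noteq> 0" using assms(1) by (metis inner_zero_left zero_neq_one)
  then have "0 < u i \<bullet> (cj u (Dg mu) *v u i)" using assms(2) by (simp add: pos_def_def)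
  also have "\<dots> = mu i" by (simp add: quad_cj UT_u[OF assms(1)] Dg_quad axis_def ifsq ifm_r del: transpose_matrix_vector)
  finally show ?thesis .
qed


lemma mv_add: "(A + B) *v x = A *v x + B *v (x::real^'n)" for A B :: "real^'n^'n"
  by (simp add: matrix_vector_mult_def vec_eq_iff sum.distrib algebra_simps)
lemma mv_scale: "(c *\<^sub>R A) *v x = c *\<^sub>R (A *v (x::real^'n))" for A :: "real^'n^'n"
  by (simp add: matrix_vector_mult_def vec_eq_iff sum_distrib_left algebra_simps)
lemma frob_scale: "frob_inner X (c *\<^sub>R Y) = c * frob_inner X Y"
  by (simp add: frob_inner_def matrix_scale_r trace_def sum_distrib_left)
lemma frob_add: "frob_inner X (Y + Z) = frob_inner X Y + frob_inner X Z"
  by (simp add: frob_inner_def matrix_add_ldistrib trace_add)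

lemma Dg_Em: "Dg f + c *\<^sub>R Em i i = Dg (\<lambda>k. f k + (if k = i then c else 0))"
  by (simp add: Dg_def Em_def vec_eq_iff)

lemma Dg_Em_mult: "Dg f ** Em i j = f i *\<^sub>R Em i j"
  by (simp add: Dg_def Em_def vec_eq_iff matrix_matrix_mult_def ifm_l ifm_r sif1 sif2)
lemma Em_Dg_mult: "Em i j ** Dg f = f j *\<^sub>R Em i j"
  by (simp add: Dg_def Em_def vec_eq_iff matrix_matrix_mult_def ifm_l ifm_r sif1 sif2)
lemma Em_Em_mult: "Em i j ** Em k l = (if j = k then Em i l else 0)"
  by (simp add: Em_def vec_eq_iff matrix_matrix_mult_def ifm_l ifm_r sif1 sif2)

lemma inv2: fixes f g :: "'n::finite \<Rightarrow> real"
  assumes "I \<noteq> J"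
    and "\<forall>k. k \<noteq> I \<longrightarrow> k \<noteq> J \<longrightarrow> f k * g k = 1"
    and "f I * g I + c * e = 1" and "f J * g J + c * e = 1"
    and "e * f I + c * g J = 0" and "e * f J + c * g I = 0"
  shows "(Dg f + c *\<^sub>R (Em I J + Em J I)) ** (Dg g + e *\<^sub>R (Em I J + Em J I)) = mat 1"
proof -
  have "(Dg f + c *\<^sub>R (Em I J + Em J I)) ** (Dg g + e *\<^sub>R (Em I J + Em J I))
    = Dg (\<lambda>i. f i * g i) + (e * f I + c * g J) *\<^sub>R Em I J + (e * f J + c * g I) *\<^sub>R Em J I
      + (c * e) *\<^sub>R (Em I I + Em J J)"
    using assms(1) by (simp add: matrix_add_ldistrib matrix_rdistrib matrix_scale_l matrix_scale_r
      Dg_mult Dg_Em_mult Em_Dg_mult Em_Em_mult algebra_simps)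
  also have "\<dots> = mat 1"
    using assms by (auto simp: Dg_def Em_def mat_def vec_eq_iff)
  finally show ?thesis .
qed

lemma quad2: "x \<bullet> ((Dg f + c *\<^sub>R (Em I J + Em J I)) *v x) = (\<Sum>i\<in>UNIV. f i * (x $ i)^2) + 2 * c * x $ I * x $ J"
  by (simp add: mv_add mv_scale inner_add_right Dg_quad Em_quad)

lemma lam_facts:
  fixes d eta mu lam :: real
  assumes "d \<ge> 2" "0 < eta" "eta * d \<le> 1/2" "0 < mu" "lam = (1 - eta * d) * mu + eta"
  shows "eta \<le> lam" "mu \<le> 2 * lam" "2 * eta * mu \<le> lam^2" "0 < lam"
proof -
  have g: "1 - eta * d \<ge> 1/2" using assms by linarith
  show "eta \<le> lam" using assms g by (simp add: mult_nonneg_nonneg)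
  have "(1 - eta * d) * mu \<ge> (1/2) * mu" using g assms by (intro mult_right_mono) auto
  then show "mu \<le> 2 * lam" using assms by linarith
  have h1: "(1 - eta * d) * mu * eta \<ge> (1/2) * mu * eta" using g assms by (intro mult_right_mono) auto
  have h2: "lam^2 \<ge> 4 * ((1 - eta * d) * mu) * eta" unfolding assms(5)
    by (smt (verit) sum_squares_bound power2_eq_square sum_power2_ge_zero power2_sum four_x_squared
        zero_le_power2 power2_diff)
  have "4 * ((1 - eta * d) * mu) * eta = 4 * ((1 - eta * d) * mu * eta)" by simp
  moreover have "2 * eta * mu = 4 * ((1/2) * mu * eta)" by simp
  ultimately show "2 * eta * mu \<le> lam^2" using h1 h2 by linarith
  show "0 < lam" using assms \<open>eta \<le> lam\<close> by linarith
qed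

lemma case1_real:
  fixes eta mu lam l :: real
  assumes "0 < eta" "0 < mu" "mu \<le> 2 * lam" "2 * eta * mu \<le> lam^2" "\<bar>l\<bar> \<le> 1"
  defines "k \<equiv> l / lam^2"
  shows "1/mu + eta * k > 0" "lam^2 * (k * (mu - 1 / (1/mu + eta * k))) \<le> 8 * eta * l^2"
proof -
  have lp: "lam^2 > 0" using assms by (smt (verit) mult_pos_pos)
  define x where "x = eta * mu * l / lam^2"
  have "\<bar>eta * mu * l\<bar> \<le> eta * mu" using assms by (simp add: abs_mult mult_left_le)
  also have "\<dots> \<le> lam^2 / 2" using assms by linarith
  finally have "\<bar>x\<bar> \<le> 1/2" using lp by (simp add: x_def abs_div field_simps)
  then have x1: "1 + x \<ge> 1/2" by linarith
  have e1: "1/mu + eta * k = (1 + x) / mu" using assms lp by (simp add: x_def k_def field_simps)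
  show "1/mu + eta * k > 0" using e1 x1 assms by simp
  have xl: "x * lam^2 = eta * mu * l" using lp by (simp add: x_def)
  have "mu - 1 / (1/mu + eta * k) = mu - mu / (1 + x)" using e1 by simp
  also have "\<dots> = mu * x / (1 + x)" using x1 by (simp add: field_simps)
  finally have "lam^2 * (k * (mu - 1 / (1/mu + eta * k))) = (lam^2 * k) * mu * x / (1 + x)" by simp
  also have "lam^2 * k = l" using lp by (simp add: k_def)
  also have "l * mu * x / (1 + x) = l * mu * (x * lam^2) / (lam^2 * (1 + x))" using lp by simp
  also have "\<dots> = eta * mu^2 * l^2 / (lam^2 * (1 + x))" unfolding xl by (simp add: power2_eq_square)
  finally have "lam^2 * (k * (mu - 1 / (1/mu + eta * k))) = eta * mu^2 * l^2 / (lam^2 * (1 + x))" .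
  also have "\<dots> \<le> eta * mu^2 * l^2 / (lam^2 * (1/2))"
    using x1 lp assms by (intro divide_left_mono mult_left_mono mult_pos_pos) auto
  also have "\<dots> = 2 * eta * l^2 * (mu^2 / lam^2)" using lp by (simp add: field_simps)
  also have "\<dots> \<le> 2 * eta * l^2 * 4"
  proof -
    have "mu^2 \<le> (2*lam)^2" using assms by (intro power_mono) auto
    then have "mu^2 / lam^2 \<le> 4" using lp by (simp add: field_simps power_mult_distrib)
    then show ?thesis using assms by (intro mult_left_mono) auto
  qed
  finally show "lam^2 * (k * (mu - 1 / (1/mu + eta * k))) \<le> 8 * eta * l^2" by simp
qed

lemma aux15: "16 * (y::real) \<le> X \<Longrightarrow> 15/16 * X \<le> X - y" by linarith

lemma case2_real:
  fixes eta muI muJ lamI lamJ l s c0 c D :: real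
  assumes "0 < eta" "0 < muI" "muI \<le> 2 * lamI" "2 * eta * muI \<le> lamI^2"
    "0 < muJ" "muJ \<le> 2 * lamJ" "2 * eta * muJ \<le> lamJ^2" "\<bar>l\<bar> \<le> 1" "s^2 = 1"
    "0 < lamI" "0 < lamJ"
    and c0_def: "c0 = s * l / (2 * lamI * lamJ)"
    and c_def: "c = eta * c0"
    and D_def: "D = (1/muI) * (1/muJ) - c^2"
  shows "16 * c^2 \<le> (1/muI) * (1/muJ)" "D > 0"
    "lamI * lamJ * (c0 * (2 * c / D)) \<le> 4 * eta * l^2"
proof -
  have c2: "c^2 = eta^2 * l^2 / (4 * lamI^2 * lamJ^2)"
    using assms(1-11) unfolding c_def c0_def by (simp add: power_mult_distrib power_divide field_simps)
  have den: "lamI^2 * lamJ^2 \<ge> (2*eta*muI) * (2*eta*muJ)"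
    using assms(1-11) by (intro mult_mono) auto
  have "l^2 \<le> 1" using assms(8) abs_square_le_1 by blast
  have "eta^2 * l^2 \<le> eta^2 * 1" using \<open>l^2 \<le> 1\<close> by (intro mult_left_mono) auto
  moreover have "4 * ((2*eta*muI) * (2*eta*muJ)) \<le> 4 * lamI^2 * lamJ^2" using den by (simp add: ac_simps)
  moreover have "0 < 4 * ((2*eta*muI) * (2*eta*muJ))" using assms(1-11) by simp
  ultimately have "eta^2 * l^2 / (4 * lamI^2 * lamJ^2) \<le> eta^2 * 1 / (4 * ((2*eta*muI) * (2*eta*muJ)))"
    by (intro frac_le) auto
  then have "16 * c^2 \<le> 16 * (eta^2 * 1 / (4 * ((2*eta*muI) * (2*eta*muJ))))"
    unfolding c2 by (rule mult_left_mono) simp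
  also have "\<dots> = (1/muI) * (1/muJ)" using assms(1-11) by (simp add: field_simps power2_eq_square)
  finally show c16: "16 * c^2 \<le> (1/muI) * (1/muJ)" .
  have ab: "(1/muI) * (1/muJ) > 0" using assms(1-11) by simp
  show Dpos: "D > 0" unfolding D_def using c16 ab by (smt (verit))
  have D15: "D \<ge> (15/16) * ((1/muI) * (1/muJ))" unfolding D_def using c16 by (rule aux15)
  have "lamI * lamJ * (c0 * (2 * c / D)) = 2 * eta * c0^2 * lamI * lamJ / D"
    by (simp add: c_def power2_eq_square field_simps)
  also have "\<dots> \<le> 2 * eta * c0^2 * lamI * lamJ / ((15/16) * ((1/muI) * (1/muJ)))"
    using D15 ab Dpos assms(1-11) by (intro divide_left_mono mult_nonneg_nonneg) auto
  also have "\<dots> = (32/15) * eta * c0^2 * lamI * lamJ * muI * muJ"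
    using assms(1-11) by (simp add: field_simps)
  also have "c0^2 = l^2 / (4 * lamI^2 * lamJ^2)"
    using assms(1-11) unfolding c0_def by (simp add: power_mult_distrib power_divide field_simps)
  also have "(32/15) * eta * (l^2 / (4 * lamI^2 * lamJ^2)) * lamI * lamJ * muI * muJ
      = (8/15) * eta * l^2 * (muI / lamI) * (muJ / lamJ)"
    using assms(1-11) by (simp add: field_simps power2_eq_square)
  also have "\<dots> \<le> (8/15) * (eta * l^2) * (2 * 2)"
  proof -
    have "muI / lamI \<le> 2" "muJ / lamJ \<le> 2" using assms(1-11) by (simp_all add: field_simps)
    moreover have "muI / lamI \<ge> 0" "muJ / lamJ \<ge> 0" using assms(1-11) by simp_all
    ultimately have m: "(muI / lamI) * (muJ / lamJ) \<le> 2 * 2" by (intro mult_mono) auto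
    have p: "0 \<le> (8/15) * (eta * l^2)" using assms(1) by simp
    have "(8/15) * eta * l^2 * (muI / lamI) * (muJ / lamJ) = (8/15) * (eta * l^2) * ((muI / lamI) * (muJ / lamJ))"
      by (simp add: mult.assoc)
    also have "\<dots> \<le> (8/15) * (eta * l^2) * (2 * 2)" using m p by (rule mult_left_mono)
    finally show ?thesis .
  qed
  also have "\<dots> \<le> 4 * eta * l^2"
  proof -
    have "0 \<le> eta * l^2" using assms(1) by simp
    then show ?thesis by simp
  qed
  finally show "lamI * lamJ * (c0 * (2 * c / D)) \<le> 4 * eta * l^2" .
qed


definition Lc :: "('n::finite \<Rightarrow> real^'n) \<Rightarrow> real^'n^'n \<Rightarrow> real^'n^'n" where
  "Lc u L = (\<chi> i j. u i \<bullet> (L *v u j))"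

lemma Lc_eq: "Lc u L = transpose (Um u) ** L ** Um u"
proof -
  have "(u i \<bullet> (L *v u j)) = (transpose (Um u) ** L ** Um u) $ i $ j" for i j
  proof -
    have "(transpose (Um u) ** L ** Um u) $ i $ j = (\<Sum>k\<in>UNIV. \<Sum>a\<in>UNIV. u i $ a * (L $ a $ k * u j $ k))"
      by (simp add: matrix_matrix_mult_def transpose_def Um_def sum_distrib_right mult.assoc)
    also have "\<dots> = (\<Sum>a\<in>UNIV. \<Sum>k\<in>UNIV. u i $ a * (L $ a $ k * u j $ k))" by (rule sum.swap)
    also have "\<dots> = u i \<bullet> (L *v u j)"
      by (simp add: inner_vec_def matrix_vector_mult_def sum_distrib_left)
    finally show ?thesis by simp
  qed
  then show ?thesis by (simp add: Lc_def vec_eq_iff)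
qed

lemma L_cj: fixes u :: "'n::finite \<Rightarrow> real^'n" assumes "\<forall>i j. u i \<bullet> u j = (if i = j then 1 else 0)"
  shows "L = cj u (Lc u L)"
proof -
  have "cj u (Lc u L) = (Um u ** transpose (Um u)) ** L ** (Um u ** transpose (Um u))"
    by (simp add: cj_def Lc_eq matrix_mul_assoc)
  then show ?thesis using orth2[OF assms] by simp
qed

lemma frob_L: fixes u :: "'n::finite \<Rightarrow> real^'n" assumes "\<forall>i j. u i \<bullet> u j = (if i = j then 1 else 0)"
  shows "frob_inner L L = (\<Sum>i\<in>UNIV. \<Sum>j\<in>UNIV. (u i \<bullet> (L *v u j))^2)"
proof -
  have "frob_inner L L = frob_inner (Lc u L) (Lc u L)"
    using frob_cj[OF assms] L_cj[OF assms] by metis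
  also have "\<dots> = (\<Sum>j\<in>UNIV. \<Sum>i\<in>UNIV. (u i \<bullet> (L *v u j))^2)"
    by (simp add: frob_inner_def trace_def matrix_matrix_mult_def transpose_def Lc_def power2_eq_square)
  also have "\<dots> = (\<Sum>i\<in>UNIV. \<Sum>j\<in>UNIV. (u i \<bullet> (L *v u j))^2)" by (rule sum.swap)
  finally show ?thesis .
qed

lemma L_sym: fixes u :: "'n::finite \<Rightarrow> real^'n" assumes "sym_mat L" shows "u i \<bullet> (L *v u j) = u j \<bullet> (L *v u i)"
proof -
  have "u i \<bullet> (L *v u j) = (u i v* L) \<bullet> u j" by (simp add: dot_lmul_matrix)
  also have "u i v* L = transpose L *v u i" by simp
  also have "\<dots> = L *v u i" using assms by (simp add: sym_mat_def)
  finally show ?thesis by (simp add: inner_commute)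
qed

lemma w_unit: assumes "\<forall>i j. u i \<bullet> u j = (if i = j then 1 else 0)" and "s \<in> {-1, 1}"
  shows "norm (sparse_w u I J s) = 1"
proof -
  have "sparse_w u I J s \<bullet> sparse_w u I J s = 1"
  proof (cases "I = J")
    case True then show ?thesis using assms by (simp add: sparse_w_def)
  next
    case False
    have "s * s = 1" using assms(2) by auto
    then show ?thesis using assms False
      by (simp add: sparse_w_def inner_add_left inner_add_right algebra_simps)
  qed
  then show ?thesis by (simp add: norm_eq_sqrt_inner)
qed

lemma ell_bound: assumes "\<forall>i j. u i \<bullet> u j = (if i = j then 1 else 0)" and "s \<in> {-1, 1}"
    and "spec_norm L \<le> 1"
  shows "\<bar>sparse_w u I J s \<bullet> (L *v sparse_w u I J s)\<bar> \<le> 1"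
proof -
  let ?w = "sparse_w u I J s"
  have n: "norm ?w = 1" by (rule w_unit[OF assms(1,2)])
  have "\<bar>?w \<bullet> (L *v ?w)\<bar> \<le> norm ?w * norm (L *v ?w)" by (rule Cauchy_Schwarz_ineq2)
  also have "\<dots> = norm (L *v ?w)" using n by simp
  also have "\<dots> \<le> onorm ((*v) L) * norm ?w" by (rule onorm) simp
  also have "\<dots> \<le> 1" using n assms(3) by (simp add: spec_norm_def)
  finally show ?thesis .
qed

lemma ell_ne: assumes "sym_mat L" and "s \<in> {-1, 1}" and "I \<noteq> J"
  shows "sparse_w u I J s \<bullet> (L *v sparse_w u I J s)
     = (u I \<bullet> (L *v u I) + u J \<bullet> (L *v u J)) / 2 + s * (u I \<bullet> (L *v u J))"
proof -
  have ss: "s * s = 1" using assms(2) by auto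
  have sy: "u J \<bullet> (L *v u I) = u I \<bullet> (L *v u J)" using L_sym[OF assms(1)] by metis
  have "sparse_w u I J s \<bullet> (L *v sparse_w u I J s)
      = (1/2) * (u I \<bullet> (L *v u I) + s * (u I \<bullet> (L *v u J)) + s * (u J \<bullet> (L *v u I)) + (s * s) * (u J \<bullet> (L *v u J)))"
    using assms(3) by (simp add: sparse_w_def inner_add_left inner_add_right matrix_vector_mult_scaleR
        matrix_vector_right_distrib algebra_simps)
  then show ?thesis using ss sy by (simp add: algebra_simps)
qed



lemma Lt_eq: "sparse_Lt u lam L I I s = ((sparse_w u I I s \<bullet> (L *v sparse_w u I I s)) / (lam I)^2) *\<^sub>R cj u (Em I I)"
  by (simp add: sparse_Lt_def Let_def outer_cj)

lemma Lt_ne: "I \<noteq> J \<Longrightarrow> sparse_Lt u lam L I J s =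
   (s * (sparse_w u I J s \<bullet> (L *v sparse_w u I J s)) / (2 * lam I * lam J)) *\<^sub>R cj u (Em I J + Em J I)"
  by (simp add: sparse_Lt_def Let_def outer_cj cj_add)

lemma lin_aux: "\<lbrakk>- T / 4 \<le> y; 0 < S; T \<le> S; 0 \<le> T; Q = S + y\<rbrakk> \<Longrightarrow> 0 < (Q::real)" by linarith

lemma pos2: fixes f :: "'n::finite \<Rightarrow> real"
  assumes "I \<noteq> J" "\<forall>i. f i > 0" "16 * c^2 \<le> f I * f J"
  shows "pos_def (Dg f + c *\<^sub>R (Em I J + Em J I))"
  unfolding pos_def_def
proof (intro conjI allI impI)
  show "sym_mat (Dg f + c *\<^sub>R (Em I J + Em J I))"
    by (auto simp: sym_mat_def Dg_def Em_def transpose_def vec_eq_iff)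
next
  fix x :: "real^'n" assume "x \<noteq> 0"
  let ?S = "\<Sum>i\<in>UNIV. f i * (x $ i)^2"
  let ?T = "f I * (x $ I)^2 + f J * (x $ J)^2"
  have S: "?S > 0" using pos_Dg[OF assms(2)] \<open>x \<noteq> 0\<close> by (simp add: pos_def_def Dg_quad)
  have "?T = (\<Sum>i\<in>{I, J}. f i * (x $ i)^2)" using assms(1) by simp
  also have "\<dots> \<le> ?S"
  proof (rule sum_mono2)
    fix b show "0 \<le> f b * (x $ b)^2" using assms(2) by (simp add: less_imp_le)
  qed auto
  finally have TS: "?T \<le> ?S" .
  have T0: "?T \<ge> 0" using assms(2) by (simp add: less_imp_le)
  have "(2 * c * x $ I * x $ J)^2 = 4 * c^2 * ((x $ I)^2 * (x $ J)^2)" by (simp add: power_mult_distrib)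
  also have "\<dots> \<le> 4 * ((f I * f J) / 16) * ((x $ I)^2 * (x $ J)^2)"
    using assms(3) by (intro mult_right_mono mult_left_mono) auto
  also have "\<dots> = (4 * (f I * (x $ I)^2) * (f J * (x $ J)^2)) / 16" by (simp add: algebra_simps)
  also have "\<dots> \<le> ?T^2 / 16"
  proof -
    have "0 \<le> (f I * (x $ I)^2 - f J * (x $ J)^2)^2" by simp
    then show ?thesis by (simp add: power2_eq_square algebra_simps)
  qed
  also have "\<dots> = (?T / 4)^2" by (simp add: power2_eq_square)
  finally have "\<bar>2 * c * x $ I * x $ J\<bar> \<le> \<bar>?T / 4\<bar>" using abs_le_square_iff by blast
  moreover have "\<bar>?T / 4\<bar> = ?T / 4" using T0 by simp
  moreover have "- (2 * c * x $ I * x $ J) \<le> \<bar>2 * c * x $ I * x $ J\<bar>" by (rule abs_ge_minus_self)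
  ultimately have "2 * c * x $ I * x $ J \<ge> - ?T / 4" by linarith
  moreover have "x \<bullet> ((Dg f + c *\<^sub>R (Em I J + Em J I)) *v x) = ?S + 2 * c * x $ I * x $ J"
    by (rule quad2)
  ultimately show "0 < x \<bullet> ((Dg f + c *\<^sub>R (Em I J + Em J I)) *v x)"
    using S TS T0 lin_aux by blast
qed

lemma sum_bound: fixes M :: "'n::finite \<Rightarrow> 'n \<Rightarrow> real" and eta :: real
  assumes "eta > 0"
  shows "(\<Sum>I\<in>UNIV. \<Sum>J\<in>UNIV. 4 * eta * ((M I I)^2 + (M J J)^2) + 4 * eta * (if I = J then 0 else (M I J)^2))
     \<le> 8 * eta * real CARD('n) * (\<Sum>I\<in>UNIV. \<Sum>J\<in>UNIV. (M I J)^2)"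
proof -
  let ?A = "\<Sum>I\<in>UNIV. (M I I)^2"
  let ?B = "\<Sum>I\<in>UNIV. \<Sum>J\<in>UNIV. (if I = J then 0 else (M I J)^2)"
  have B0: "?B \<ge> 0" by (intro sum_nonneg) auto
  have split: "(\<Sum>I\<in>UNIV. \<Sum>J\<in>UNIV. (M I J)^2) = ?A + ?B"
  proof -
    have "(\<Sum>J\<in>UNIV. (M I J)^2) = (M I I)^2 + (\<Sum>J\<in>UNIV. (if I = J then 0 else (M I J)^2))" for I
    proof -
      have "(\<Sum>J\<in>UNIV. (M I J)^2) = (\<Sum>J\<in>UNIV. (if I = J then (M I J)^2 else 0) + (if I = J then 0 else (M I J)^2))"
        by (rule sum.cong) auto
      also have "\<dots> = (M I I)^2 + (\<Sum>J\<in>UNIV. (if I = J then 0 else (M I J)^2))"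
        by (simp add: sum.distrib)
      finally show ?thesis .
    qed
    then show ?thesis by (simp add: sum.distrib)
  qed
  have "(\<Sum>I\<in>UNIV. \<Sum>J\<in>UNIV. 4 * eta * ((M I I)^2 + (M J J)^2) + 4 * eta * (if I = J then 0 else (M I J)^2))
      = 4 * eta * (real CARD('n) * ?A + real CARD('n) * ?A) + 4 * eta * ?B"
    by (simp add: sum.distrib sum_distrib_left algebra_simps)
  also have "\<dots> = 8 * eta * real CARD('n) * ?A + 4 * eta * ?B" by (simp add: algebra_simps)
  also have "\<dots> \<le> 8 * eta * real CARD('n) * ?A + 8 * eta * real CARD('n) * ?B"
  proof -
    have "4 * eta * ?B \<le> 8 * eta * real CARD('n) * ?B"
    proof (rule mult_right_mono[OF _ B0])
      have "real CARD('n) \<ge> 1" by (simp add: Suc_le_eq)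
      then have c1: "1 \<le> 2 * real CARD('n)" by linarith
      have "4 * eta * 1 \<le> 4 * eta * (2 * real CARD('n))" by (rule mult_left_mono[OF c1]) (use assms in simp)
      then show "4 * eta \<le> 8 * eta * real CARD('n)" by simp
    qed
    then show ?thesis by simp
  qed
  also have "\<dots> = 8 * eta * real CARD('n) * (\<Sum>I\<in>UNIV. \<Sum>J\<in>UNIV. (M I J)^2)"
    by (simp add: split algebra_simps)
  finally show ?thesis .
qed


lemma Winv: assumes "\<forall>i j. u i \<bullet> u j = (if i = j then 1 else 0)" "W = cj u (Dg mu)" "\<forall>i. mu i > 0"
  shows "matrix_inv W = cj u (Dg (\<lambda>i. 1 / mu i))"
proof -
  have "mu i \<noteq> 0" for i using assms(3) by (metis less_irrefl)
  then have "(\<lambda>i. mu i * (1 / mu i)) = (\<lambda>_. 1)" by (auto simp: fun_eq_iff)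
  then have "Dg mu ** Dg (\<lambda>i. 1 / mu i) = mat 1" by (simp add: Dg_mult Dg_one)
  then show ?thesis using cj_inv[OF assms(1)] assms(2) by simp
qed

lemma caseEq:
  fixes u :: "'n::finite \<Rightarrow> real^'n"
  assumes orth: "\<forall>i j. u i \<bullet> u j = (if i = j then 1 else 0)" and Wc: "W = cj u (Dg mu)"
    and mup: "\<forall>i. mu i > 0"
    and lf: "\<forall>i. mu i \<le> 2 * lam i \<and> 2 * eta * mu i \<le> (lam i)^2 \<and> 0 < lam i"
    and eta: "eta > 0" and Ls: "spec_norm L \<le> 1" and s: "s \<in> {-1, 1}"
  shows "pos_def (matrix_inv W + eta *\<^sub>R sparse_Lt u lam L I I s)
    \<and> lam I * lam I * frob_inner (W - matrix_inv (matrix_inv W + eta *\<^sub>R sparse_Lt u lam L I I s))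
        (sparse_Lt u lam L I I s) \<le> 8 * eta * (u I \<bullet> (L *v u I))^2"
proof -
  define l where "l = sparse_w u I I s \<bullet> (L *v sparse_w u I I s)"
  have lb: "\<bar>l\<bar> \<le> 1" unfolding l_def by (rule ell_bound[OF orth s Ls])
  have leq: "l = u I \<bullet> (L *v u I)" by (simp add: l_def sparse_w_def)
  define k where "k = l / (lam I)^2"
  have Lt: "sparse_Lt u lam L I I s = k *\<^sub>R cj u (Em I I)" by (simp add: Lt_eq k_def l_def)
  define a where "a = (\<lambda>i. 1 / mu i + (if i = I then eta * k else 0))"
  have c1: "1 / mu I + eta * k > 0" "(lam I)^2 * (k * (mu I - 1 / (1 / mu I + eta * k))) \<le> 8 * eta * l^2"
    using case1_real[of eta "mu I" "lam I" l] eta mup lf lb by (auto simp: k_def)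
  have apos: "\<forall>i. a i > 0" using c1(1) mup by (simp add: a_def)
  have A: "matrix_inv W + eta *\<^sub>R sparse_Lt u lam L I I s = cj u (Dg a)"
    by (simp add: Winv[OF orth Wc mup] Lt cj_scale[symmetric] cj_add[symmetric] Dg_Em a_def)
  have pos: "pos_def (cj u (Dg a))" by (rule pos_cj[OF orth pos_Dg[OF apos]])
  have "a i \<noteq> 0" for i using apos by (metis less_irrefl)
  then have "(\<lambda>i. a i * (1 / a i)) = (\<lambda>_. 1)" by (auto simp: fun_eq_iff)
  then have inv: "matrix_inv (cj u (Dg a)) = cj u (Dg (\<lambda>i. 1 / a i))"
    using cj_inv[OF orth] by (simp add: Dg_mult Dg_one)
  have "frob_inner (W - matrix_inv (matrix_inv W + eta *\<^sub>R sparse_Lt u lam L I I s)) (sparse_Lt u lam L I I s)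
      = frob_inner (cj u (Dg mu - Dg (\<lambda>i. 1 / a i))) (cj u (k *\<^sub>R Em I I))"
    by (simp only: A inv) (simp add: Wc Lt cj_diff cj_scale)
  also have "\<dots> = k * (mu I - 1 / (1 / mu I + eta * k))"
    by (simp add: frob_cj[OF orth] frob_scale frob_Em Dg_def a_def)
  finally show ?thesis using pos A c1(2) leq by (simp add: power2_eq_square)
qed

lemma caseNe:
  fixes u :: "'n::finite \<Rightarrow> real^'n"
  assumes orth: "\<forall>i j. u i \<bullet> u j = (if i = j then 1 else 0)" and Wc: "W = cj u (Dg mu)"
    and mup: "\<forall>i. mu i > 0"
    and lf: "\<forall>i. mu i \<le> 2 * lam i \<and> 2 * eta * mu i \<le> (lam i)^2 \<and> 0 < lam i"
    and eta: "eta > 0" and Ls: "spec_norm L \<le> 1" and s: "s \<in> {-1, 1}" and IJ: "I \<noteq> J"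
  shows "pos_def (matrix_inv W + eta *\<^sub>R sparse_Lt u lam L I J s)
    \<and> lam I * lam J * frob_inner (W - matrix_inv (matrix_inv W + eta *\<^sub>R sparse_Lt u lam L I J s))
        (sparse_Lt u lam L I J s) \<le> 4 * eta * (sparse_w u I J s \<bullet> (L *v sparse_w u I J s))^2"
proof -
  define l where "l = sparse_w u I J s \<bullet> (L *v sparse_w u I J s)"
  have lb: "\<bar>l\<bar> \<le> 1" unfolding l_def by (rule ell_bound[OF orth s Ls])
  have s2: "s^2 = 1" using s by auto
  define c0 where "c0 = s * l / (2 * lam I * lam J)"
  define c where "c = eta * c0"
  define D where "D = (1 / mu I) * (1 / mu J) - c^2"
  have Lt: "sparse_Lt u lam L I J s = c0 *\<^sub>R cj u (Em I J + Em J I)"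
    by (simp add: Lt_ne[OF IJ] c0_def l_def)
  have c2: "16 * c^2 \<le> (1 / mu I) * (1 / mu J)" "D > 0"
    "lam I * lam J * (c0 * (2 * c / D)) \<le> 4 * eta * l^2"
    using case2_real[of eta "mu I" "lam I" "mu J" "lam J" l s c0 c D] eta mup lf lb s2
    by (auto simp: c0_def c_def D_def)
  define f where "f = (\<lambda>i. 1 / mu i)"
  define g where "g = (\<lambda>i. if i = I then (1 / mu J) / D else if i = J then (1 / mu I) / D else mu i)"
  define e where "e = - c / D"
  have fpos: "\<forall>i. f i > 0" using mup by (simp add: f_def)
  have A: "matrix_inv W + eta *\<^sub>R sparse_Lt u lam L I J s = cj u (Dg f + c *\<^sub>R (Em I J + Em J I))"
    by (simp add: Winv[OF orth Wc mup] Lt cj_scale[symmetric] cj_add[symmetric] f_def c_def)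
  have pos: "pos_def (cj u (Dg f + c *\<^sub>R (Em I J + Em J I)))"
    by (rule pos_cj[OF orth pos2[OF IJ fpos]]) (use c2(1) in \<open>simp add: f_def\<close>)
  have mnz: "mu I \<noteq> 0" "mu J \<noteq> 0" using mup by (metis less_irrefl)+
  have prod: "(Dg f + c *\<^sub>R (Em I J + Em J I)) ** (Dg g + e *\<^sub>R (Em I J + Em J I)) = mat 1"
  proof (rule inv2[OF IJ])
    have "mu i \<noteq> 0" for i using mup by (metis less_irrefl)
    then show "\<forall>k. k \<noteq> I \<longrightarrow> k \<noteq> J \<longrightarrow> f k * g k = 1" by (simp add: f_def g_def)
    have "f I * g I + c * e = ((1 / mu I) * (1 / mu J) - c^2) / D"
      using IJ by (simp add: f_def g_def e_def diff_divide_distrib power2_eq_square)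
    then show "f I * g I + c * e = 1" using c2(2) D_def by (metis divide_self less_irrefl)
    have "f J * g J + c * e = ((1 / mu I) * (1 / mu J) - c^2) / D"
      using IJ by (simp add: f_def g_def e_def diff_divide_distrib power2_eq_square mult.commute)
    then show "f J * g J + c * e = 1" using c2(2) D_def by (metis divide_self less_irrefl)
    show "e * f I + c * g J = 0" using c2(2) mnz IJ by (simp add: f_def g_def e_def field_simps)
    show "e * f J + c * g I = 0" using c2(2) mnz IJ by (simp add: f_def g_def e_def field_simps)
  qed
  have inv: "matrix_inv (cj u (Dg f + c *\<^sub>R (Em I J + Em J I))) = cj u (Dg g + e *\<^sub>R (Em I J + Em J I))"
    by (rule cj_inv[OF orth prod])
  have "frob_inner (W - matrix_inv (matrix_inv W + eta *\<^sub>R sparse_Lt u lam L I J s)) (sparse_Lt u lam L I J s)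
      = frob_inner (cj u (Dg mu - (Dg g + e *\<^sub>R (Em I J + Em J I)))) (cj u (c0 *\<^sub>R (Em I J + Em J I)))"
    by (simp only: A inv) (simp add: Wc Lt cj_diff cj_scale)
  also have "\<dots> = c0 * (- 2 * e)"
    unfolding frob_cj[OF orth] frob_scale frob_add frob_Em using IJ by (simp add: Dg_def Em_def)
  also have "\<dots> = c0 * (2 * c / D)" by (simp add: e_def)
  finally show ?thesis using pos A c2(3) by (simp add: l_def)
qed


lemma lin2: "X + Y = 2 * Z \<Longrightarrow> 0 \<le> Y \<Longrightarrow> 0 \<le> Z \<Longrightarrow> H = X / 4 \<Longrightarrow> H \<le> (Z::real)" by linarith

lemma avg_aux: fixes eta a b q :: real assumes "eta > 0"
  shows "(4 * eta * ((a + b) / 2 + 1 * q)^2 + 4 * eta * ((a + b) / 2 + (-1) * q)^2) / 2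
    \<le> 4 * eta * (a^2 + b^2) + 4 * eta * q^2"
proof -
  have "(4 * eta * ((a + b) / 2 + 1 * q)^2 + 4 * eta * ((a + b) / 2 + (-1) * q)^2) / 2
      = 4 * eta * (((a + b) / 2)^2 + q^2)" by (simp add: power2_eq_square algebra_simps)
  also have "\<dots> \<le> 4 * eta * ((a^2 + b^2) + q^2)"
  proof -
    have "((a + b) / 2)^2 \<le> a^2 + b^2"
    proof -
      have h: "(a + b)^2 + (a - b)^2 = 2 * (a^2 + b^2)" by (simp add: power2_eq_square algebra_simps)
      have h2: "((a + b) / 2)^2 = (a + b)^2 / 4" by (simp add: power_divide)
      have "0 \<le> (a - b)^2" "0 \<le> a^2" "0 \<le> b^2" by simp_all
      then show ?thesis using lin2[OF h _ _ h2] by simp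
    qed
    then show ?thesis using assms by (intro mult_left_mono) auto
  qed
  finally show ?thesis by (simp add: algebra_simps)
qed

theorem lemma5:
  fixes W L :: "real^'n^'n" and u :: "'n \<Rightarrow> real^'n" and mu :: "'n \<Rightarrow> real" and eta :: real
  assumes "CARD('n) \<ge> 2"
    and "0 < eta" and "eta \<le> 1 / (2 * real CARD('n))"
    and "pos_def W" and "trace W = 1"
    and "\<forall>i j. u i \<bullet> u j = (if i = j then 1 else 0)"
    and "W = (\<Sum>i\<in>UNIV. mu i *\<^sub>R outer (u i) (u i))"
    and "sym_mat L" and "spec_norm L \<le> 1"
  shows "(\<forall>I J s. s \<in> {-1, 1} \<longrightarrow>
            pos_def (matrix_inv W + eta *\<^sub>R sparse_Lt u (samp_prob eta mu) L I J s))
      \<and> sparse_expect (samp_prob eta mu)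
          (\<lambda>I J s. frob_inner
             (W - matrix_inv (matrix_inv W + eta *\<^sub>R sparse_Lt u (samp_prob eta mu) L I J s))
             (sparse_Lt u (samp_prob eta mu) L I J s))
        \<le> 8 * eta * real CARD('n) * (frob_norm L)^2"
proof -
  note orth = assms(6)
  have Wc: "W = cj u (Dg mu)" by (rule W_cj[OF assms(7)])
  have pW: "pos_def (cj u (Dg mu))" using assms(4) Wc by simp
  have mup: "\<forall>i. mu i > 0" using mu_pos[OF orth pW] by simp
  let ?d = "real CARD('n)"
  define lam where "lam = samp_prob eta mu"
  have d2: "?d \<ge> 2" using assms(1) by simp
  have "eta * ?d \<le> (1 / (2 * ?d)) * ?d" using assms(3) d2 by (intro mult_right_mono) auto
  then have ed: "eta * ?d \<le> 1/2" using d2 by simp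
  have lamE: "lam i = (1 - eta * ?d) * mu i + eta" for i
    using d2 by (simp add: lam_def samp_prob_def)
  have lf: "\<forall>i. mu i \<le> 2 * lam i \<and> 2 * eta * mu i \<le> (lam i)^2 \<and> 0 < lam i"
  proof
    fix i
    have mi: "0 < mu i" using mup by simp
    show "mu i \<le> 2 * lam i \<and> 2 * eta * mu i \<le> (lam i)^2 \<and> 0 < lam i"
      using lam_facts[OF d2 assms(2) ed mi lamE[of i]] by simp
  qed
  define F where "F = (\<lambda>I J s. frob_inner
             (W - matrix_inv (matrix_inv W + eta *\<^sub>R sparse_Lt u lam L I J s))
             (sparse_Lt u lam L I J s))"
  define m where "m = (\<lambda>i j. u i \<bullet> (L *v u j))"
  show ?thesis
  proof (intro conjI allI impI)
    fix I J and s :: real assume s: "s \<in> {-1, 1}"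
    show "pos_def (matrix_inv W + eta *\<^sub>R sparse_Lt u (samp_prob eta mu) L I J s)"
    proof (cases "I = J")
      case True then show ?thesis
        using caseEq[OF orth Wc mup lf assms(2) assms(9) s, of I] by (simp add: lam_def)
    next
      case False then show ?thesis
        using caseNe[OF orth Wc mup lf assms(2) assms(9) s False] by (simp add: lam_def)
    qed
  next
    have tm: "lam I * lam J * (if I = J then F I J 1 else (F I J 1 + F I J (-1)) / 2)
        \<le> 4 * eta * ((m I I)^2 + (m J J)^2) + 4 * eta * (if I = J then 0 else (m I J)^2)" for I J
    proof (cases "I = J")
      case True
      have "lam I * lam I * F I I 1 \<le> 8 * eta * (m I I)^2"
        using caseEq[OF orth Wc mup lf assms(2) assms(9), of 1 I] by (simp add: F_def m_def)
      then show ?thesis using True by simp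
    next
      case False
      have s1: "(1::real) \<in> {-1, 1}" and s2: "(-1::real) \<in> {-1, 1}" by auto
      have e1: "lam I * lam J * F I J 1 \<le> 4 * eta * ((m I I + m J J) / 2 + 1 * m I J)^2"
        using caseNe[OF orth Wc mup lf assms(2) assms(9) s1 False] ell_ne[OF assms(8) s1 False]
        by (simp add: F_def m_def)
      have e2: "lam I * lam J * F I J (-1) \<le> 4 * eta * ((m I I + m J J) / 2 + (-1) * m I J)^2"
        using caseNe[OF orth Wc mup lf assms(2) assms(9) s2 False] ell_ne[OF assms(8) s2 False]
        by (simp add: F_def m_def)
      have "lam I * lam J * ((F I J 1 + F I J (-1)) / 2)
          = (lam I * lam J * F I J 1 + lam I * lam J * F I J (-1)) / 2" by (simp add: algebra_simps)
      also have "\<dots> \<le> (4 * eta * ((m I I + m J J) / 2 + 1 * m I J)^2 + 4 * eta * ((m I I + m J J) / 2 + (-1) * m I J)^2) / 2"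
        using e1 e2 by simp
      also have "\<dots> \<le> 4 * eta * ((m I I)^2 + (m J J)^2) + 4 * eta * (m I J)^2"
        by (rule avg_aux[OF assms(2)])
      finally show ?thesis using False by simp
    qed
    have "sparse_expect lam F = (\<Sum>I\<in>UNIV. \<Sum>J\<in>UNIV. lam I * lam J * (if I = J then F I J 1 else (F I J 1 + F I J (-1)) / 2))"
      by (simp add: sparse_expect_def)
    also have "\<dots> \<le> (\<Sum>I\<in>UNIV. \<Sum>J\<in>UNIV. 4 * eta * ((m I I)^2 + (m J J)^2) + 4 * eta * (if I = J then 0 else (m I J)^2))"
      by (intro sum_mono tm)
    also have "\<dots> \<le> 8 * eta * ?d * (\<Sum>I\<in>UNIV. \<Sum>J\<in>UNIV. (m I J)^2)"
      by (rule sum_bound[OF assms(2)])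
    also have "(\<Sum>I\<in>UNIV. \<Sum>J\<in>UNIV. (m I J)^2) = (frob_norm L)^2"
    proof -
      have "frob_inner L L \<ge> 0" unfolding frob_L[OF orth] by (intro sum_nonneg) auto
      then show ?thesis by (simp add: frob_norm_def frob_L[OF orth] m_def)
    qed
    finally show "sparse_expect (samp_prob eta mu)
          (\<lambda>I J s. frob_inner
             (W - matrix_inv (matrix_inv W + eta *\<^sub>R sparse_Lt u (samp_prob eta mu) L I J s))
             (sparse_Lt u (samp_prob eta mu) L I J s))
        \<le> 8 * eta * ?d * (frob_norm L)^2" by (simp add: F_def lam_def)
  qed
qed

end
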